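(* Let $X$ be a uniformizable Alexandroff space. Then $X$ is a functional Alexandroff space if and only if $V(x)$ is finite for every $x\in X$.
   Context: For a topological space $X$ and $a\in X$, $V(a):=\bigcap\{U: U\text{ open}, a\in U\}$; $X$ is Alexandroff if every $V(a)$ is open. $X$ is uniformizable if its topology is induced by some uniform structure on $X$. For a map $f:X\to X$ and $a\in X$ let $V_f(a):=\bigcup_{n\ge 0}f^{-n}(a)=\{x\in X:\exists n\ge0,\ f^n(x)=a\}$. The sets $\{V_f(a):a\in X\}$ form a basis of a topology on $X$ (the functional Alexandroff topology associated to $f$), in which $V_f(a)$ is the smallest open neighbourhood of $a$. A topological space $X$ is a functional Alexandroff space if there is $f:X\to X$ whose functional Alexandroff topology equals the topology of $X$. *)

theory Defs
  imports "HOL-Analysis.Analysis"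
begin

definition min_nbhd :: "'a topology \<Rightarrow> 'a \<Rightarrow> 'a set" where
  "min_nbhd T a = \<Inter>{U. openin T U \<and> a \<in> U}"

definition alexandroff_space :: "'a topology \<Rightarrow> bool" where
  "alexandroff_space T \<longleftrightarrow> (\<forall>a\<in>topspace T. openin T (min_nbhd T a))"

definition is_uniformity :: "'a set \<Rightarrow> ('a \<times> 'a) set set \<Rightarrow> bool" where
  "is_uniformity X \<U> \<longleftrightarrow>
     \<U> \<noteq> {} \<and>
     (\<forall>E\<in>\<U>. E \<subseteq> X \<times> X \<and> Id_on X \<subseteq> E) \<and>
     (\<forall>E\<in>\<U>. \<forall>F. E \<subseteq> F \<and> F \<subseteq> X \<times> X \<longrightarrow> F \<in> \<U>) \<and>
     (\<forall>E\<in>\<U>. \<forall>F\<in>\<U>. E \<inter> F \<in> \<U>) \<and>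
     (\<forall>E\<in>\<U>. E\<inverse> \<in> \<U>) \<and>
     (\<forall>E\<in>\<U>. \<exists>F\<in>\<U>. F O F \<subseteq> E)"

definition uniformizable :: "'a topology \<Rightarrow> bool" where
  "uniformizable T \<longleftrightarrow> (\<exists>\<U>. is_uniformity (topspace T) \<U> \<and>
     (\<forall>U. openin T U \<longleftrightarrow>
        U \<subseteq> topspace T \<and> (\<forall>x\<in>U. \<exists>E\<in>\<U>. E `` {x} \<subseteq> U)))"

definition fun_nbhd :: "'a set \<Rightarrow> ('a \<Rightarrow> 'a) \<Rightarrow> 'a \<Rightarrow> 'a set" where
  "fun_nbhd X f a = {x\<in>X. \<exists>n. (f ^^ n) x = a}"

definition functional_alexandroff :: "'a topology \<Rightarrow> bool" where
  "functional_alexandroff T \<longleftrightarrow> (\<exists>f. (\<forall>x\<in>topspace T. f x \<in> topspace T) \<and>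
     (\<forall>U. openin T U \<longleftrightarrow>
        (\<exists>\<B>. \<B> \<subseteq> fun_nbhd (topspace T) f ` topspace T \<and> U = \<Union>\<B>)))"

end

theory Submission
  imports Defs
begin

lemma mn_iff: "x \<in> topspace T \<Longrightarrow> y \<in> min_nbhd T x \<longleftrightarrow> (\<forall>U. openin T U \<and> x \<in> U \<longrightarrow> y \<in> U)"
  unfolding min_nbhd_def by auto

lemma mn_self: "x \<in> min_nbhd T x"
  unfolding min_nbhd_def by auto

lemma mn_sub: "x \<in> topspace T \<Longrightarrow> min_nbhd T x \<subseteq> topspace T"
  unfolding min_nbhd_def by auto

lemma mn_sym:
  assumes u: "uniformizable T" and x: "x \<in> topspace T" and y: "y \<in> min_nbhd T x"
  shows "x \<in> min_nbhd T y"
proof -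
  obtain \<U> where U: "is_uniformity (topspace T) \<U>"
    and op: "\<And>U. openin T U \<longleftrightarrow> U \<subseteq> topspace T \<and> (\<forall>x\<in>U. \<exists>E\<in>\<U>. E `` {x} \<subseteq> U)"
    using u unfolding uniformizable_def by blast
  let ?X = "topspace T"
  have yX: "y \<in> ?X" using mn_sub[OF x] y by blast
  have sub: "\<And>E. E \<in> \<U> \<Longrightarrow> E \<subseteq> ?X \<times> ?X" and idn: "\<And>E. E \<in> \<U> \<Longrightarrow> Id_on ?X \<subseteq> E"
    and inv: "\<And>E. E \<in> \<U> \<Longrightarrow> E\<inverse> \<in> \<U>" and half: "\<And>E. E \<in> \<U> \<Longrightarrow> \<exists>F\<in>\<U>. F O F \<subseteq> E"
    using U unfolding is_uniformity_def by meson+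
  show ?thesis
  proof (subst mn_iff[OF yX], intro allI impI)
    fix V assume V: "openin T V \<and> y \<in> V"
    then obtain E where E: "E \<in> \<U>" "E `` {y} \<subseteq> V" using op by blast
    define G where "G = E\<inverse>"
    have G: "G \<in> \<U>" using inv E unfolding G_def by blast
    define W where "W = {z \<in> ?X. \<exists>H\<in>\<U>. H `` {z} \<subseteq> G `` {x}}"
    have "openin T W"
    proof (subst op, intro conjI ballI)
      show "W \<subseteq> ?X" unfolding W_def by blast
    next
      fix z assume "z \<in> W"
      then obtain H where H: "H \<in> \<U>" "H `` {z} \<subseteq> G `` {x}" and zX: "z \<in> ?X" unfolding W_def by blast
      obtain K where K: "K \<in> \<U>" "K O K \<subseteq> H" using half[OF H(1)] by blast
      have "K `` {z} \<subseteq> W"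
      proof
        fix w assume w: "w \<in> K `` {z}"
        have "w \<in> ?X" using w sub[OF K(1)] by blast
        moreover have "K `` {w} \<subseteq> G `` {x}" using w K(2) H(2) by blast
        ultimately show "w \<in> W" unfolding W_def using K(1) by blast
      qed
      then show "\<exists>E\<in>\<U>. E `` {z} \<subseteq> W" using K(1) by blast
    qed
    moreover have "x \<in> W" unfolding W_def using x G by blast
    ultimately have "y \<in> W" using y mn_iff[OF x] by blast
    then obtain H where "H \<in> \<U>" "H `` {y} \<subseteq> G `` {x}" unfolding W_def by blast
    moreover have "(y,y) \<in> H" using idn[OF \<open>H \<in> \<U>\<close>] yX by auto
    ultimately have "(x,y) \<in> G" by blast
    then show "x \<in> V" using E unfolding G_def by blast
  qed
qed

lemma mn_trans: "x \<in> topspace T \<Longrightarrow> y \<in> min_nbhd T x \<Longrightarrow> z \<in> min_nbhd T y \<Longrightarrow> z \<in> min_nbhd T x"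
  unfolding min_nbhd_def by auto

lemma mn_eq:
  assumes u: "uniformizable T" and x: "x \<in> topspace T" and y: "y \<in> min_nbhd T x"
  shows "min_nbhd T y = min_nbhd T x"
proof -
  have yX: "y \<in> topspace T" using mn_sub[OF x] y by blast
  have "x \<in> min_nbhd T y" using mn_sym[OF u x y] .
  then show ?thesis using mn_trans[OF x y] mn_trans[OF yX] by blast
qed

lemma funpow_period:
  assumes "(f ^^ p) a = a"
  shows "(f ^^ n) a = (f ^^ (n mod p)) a"
proof -
  have pq: "(f ^^ (p * q)) a = a" for q
  proof (induction q)
    case 0 then show ?case by simp
  next
    case (Suc q)
    have "(f ^^ (p * Suc q)) a = (f ^^ (p * q)) ((f ^^ p) a)"
      by (metis funpow_add comp_apply mult_Suc_right add.commute)
    then show ?case using Suc assms by simp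
  qed
  have "n = n mod p + p * (n div p)" by simp
  then have "(f ^^ n) a = (f ^^ (n mod p)) ((f ^^ (p * (n div p))) a)"
    by (metis funpow_add comp_apply)
  then show ?thesis using pq by simp
qed


lemma cyclic_exists:
  assumes self: "\<And>x. x \<in> X \<Longrightarrow> x \<in> P x"
    and fin: "\<And>x. x \<in> X \<Longrightarrow> finite (P x)"
    and sub: "\<And>x. x \<in> X \<Longrightarrow> P x \<subseteq> X"
    and eq: "\<And>x y. x \<in> X \<Longrightarrow> y \<in> P x \<Longrightarrow> P y = P x"
  shows "\<exists>f. \<forall>x\<in>X. f x \<in> X \<and> fun_nbhd X f x = P x"
proof -
  define G where "G B = (SOME g. bij_betw g {..<card B} B)" for B :: "'a set"
  define f where "f x = G (P x) ((inv_into {..<card (P x)} (G (P x)) x + 1) mod card (P x))" for x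
  have bij: "bij_betw (G (P x)) {..<card (P x)} (P x)" if xX0: "x \<in> X" for x
  proof -
    obtain h where "bij_betw h {0..<card (P x)} (P x)"
      using ex_bij_betw_nat_finite fin[OF xX0] by blast
    then have "\<exists>g. bij_betw g {..<card (P x)} (P x)" by (metis lessThan_atLeast0)
    then show ?thesis unfolding G_def by (rule someI_ex)
  qed
  have npos: "card (P x) > 0" if "x \<in> X" for x
    using fin[OF that] self[OF that] card_gt_0_iff by blast
  have step: "f (G (P x) j) = G (P x) ((j + 1) mod card (P x))" if "x \<in> X" "j < card (P x)" for x j
  proof -
    have gj: "G (P x) j \<in> P x" using bij[OF that(1)] that(2) bij_betwE by blast
    then have "P (G (P x) j) = P x" using eq that(1) by blast
    moreover have "inv_into {..<card (P x)} (G (P x)) (G (P x) j) = j"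
      using bij[OF that(1)] that(2) by (simp add: bij_betw_def inv_into_f_f)
    ultimately show ?thesis unfolding f_def by simp
  qed
  have iter: "(f ^^ k) (G (P x) j) = G (P x) ((j + k) mod card (P x))" if "x \<in> X" "j < card (P x)" for x j k
  proof (induction k)
    case 0 then show ?case using that by simp
  next
    case (Suc k)
    have "(f ^^ Suc k) (G (P x) j) = f (G (P x) ((j + k) mod card (P x)))" using Suc by simp
    also have "\<dots> = G (P x) (((j + k) mod card (P x) + 1) mod card (P x))"
      using step[OF that(1)] npos[OF that(1)] by simp
    also have "((j + k) mod card (P x) + 1) mod card (P x) = (j + Suc k) mod card (P x)"
      by (simp add: mod_Suc_eq)
    finally show ?case .
  qed
  have idx: "\<exists>j<card (P x). G (P x) j = y" if "x \<in> X" "y \<in> P x" for x y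
    using bij[OF that(1)] that(2) by (metis bij_betw_iff_bijections lessThan_iff)
  have fX: "f x \<in> X" if xX1: "x \<in> X" for x
  proof -
    obtain j where j: "j < card (P x)" "G (P x) j = x" using idx[OF xX1 self[OF xX1]] by blast
    have "f x = G (P x) ((j+1) mod card (P x))" using step[OF that j(1)] j(2) by simp
    moreover have "(j+1) mod card (P x) < card (P x)" using npos[OF that] by simp
    ultimately have "f x \<in> P x" using bij[OF that] bij_betwE by fastforce
    then show ?thesis using sub[OF that] by blast
  qed
  have fpX: "(f ^^ n) x \<in> P x" if xX2: "x \<in> X" for x n
  proof -
    obtain j where j: "j < card (P x)" "G (P x) j = x" using idx[OF xX2 self[OF xX2]] by blast
    have "(f ^^ n) x = G (P x) ((j+n) mod card (P x))" using iter[OF that j(1)] j(2) by simp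
    moreover have "(j+n) mod card (P x) < card (P x)" using npos[OF that] by simp
    ultimately show ?thesis using bij[OF that] bij_betwE by fastforce
  qed
  have "fun_nbhd X f a = P a" if a: "a \<in> X" for a
  proof
    show "fun_nbhd X f a \<subseteq> P a"
    proof
      fix x assume "x \<in> fun_nbhd X f a"
      then obtain n where x: "x \<in> X" "(f ^^ n) x = a" unfolding fun_nbhd_def by blast
      then have "a \<in> P x" using fpX by metis
      then have "P a = P x" using eq x(1) by blast
      then show "x \<in> P a" using self[OF x(1)] by simp
    qed
  next
    show "P a \<subseteq> fun_nbhd X f a"
    proof
      fix x assume xa: "x \<in> P a"
      have xX: "x \<in> X" using xa sub[OF a] by blast
      have Px: "P x = P a" using eq[OF a xa] .
      obtain i where i: "i < card (P a)" "G (P a) i = x" using idx[OF a xa] by blast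
      obtain j where j: "j < card (P a)" "G (P a) j = a" using idx[OF a self[OF a]] by blast
      define k where "k = j + card (P a) - i"
      have "(i + k) mod card (P a) = j" using i j unfolding k_def by simp
      then have "(f ^^ k) x = a" using iter[OF a i(1)] i(2) j(2) by simp
      then show "x \<in> fun_nbhd X f a" unfolding fun_nbhd_def using xX by blast
    qed
  qed
  then show ?thesis using fX by blast
qed

theorem mainTheorem5:
  fixes T :: "'a topology"
  assumes "alexandroff_space T" and "uniformizable T"
  shows "functional_alexandroff T \<longleftrightarrow> (\<forall>x\<in>topspace T. finite (min_nbhd T x))"
proof
  assume "functional_alexandroff T"
  then obtain f where fX: "\<forall>x\<in>topspace T. f x \<in> topspace T"
    and op: "\<And>U. openin T U \<longleftrightarrow> (\<exists>\<B>. \<B> \<subseteq> fun_nbhd (topspace T) f ` topspace T \<and> U = \<Union>\<B>)"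
    unfolding functional_alexandroff_def by blast
  let ?X = "topspace T"
  have Vopen: "openin T (fun_nbhd ?X f a)" if "a \<in> ?X" for a
    using op[of "fun_nbhd ?X f a"] that by blast
  have mnV: "min_nbhd T a \<subseteq> fun_nbhd ?X f a" if a: "a \<in> ?X" for a
  proof -
    have "a \<in> fun_nbhd ?X f a" unfolding fun_nbhd_def using a by (auto intro!: exI[where x=0])
    then show ?thesis using Vopen[OF a] unfolding min_nbhd_def by blast
  qed
  show "\<forall>x\<in>?X. finite (min_nbhd T x)"
  proof
    fix a assume a: "a \<in> ?X"
    have faX: "f a \<in> ?X" using fX a by simp
    have "a \<in> min_nbhd T (f a)"
    proof (subst mn_iff[OF faX], intro allI impI)
      fix U assume U: "openin T U \<and> f a \<in> U"
      have "openin T U" using U by simp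
      then have "\<exists>\<B>. \<B> \<subseteq> fun_nbhd ?X f ` ?X \<and> U = \<Union>\<B>" by (simp only: op)
      then obtain \<B> where B: "\<B> \<subseteq> fun_nbhd ?X f ` ?X" "U = \<Union>\<B>" by blast
      then obtain b where b: "b \<in> ?X" "fun_nbhd ?X f b \<in> \<B>" "f a \<in> fun_nbhd ?X f b" using U by blast
      then obtain n where "(f ^^ n) (f a) = b" unfolding fun_nbhd_def by blast
      then have "(f ^^ Suc n) a = b" by (metis comp_apply funpow_Suc_right)
      then have "a \<in> fun_nbhd ?X f b" unfolding fun_nbhd_def using a by blast
      then show "a \<in> U" using b B by blast
    qed
    then have "f a \<in> min_nbhd T a" using mn_sym[OF assms(2) faX] by blast
    then have "f a \<in> fun_nbhd ?X f a" using mnV[OF a] by blast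
    then obtain k where "(f ^^ k) (f a) = a" unfolding fun_nbhd_def by blast
    then have per: "(f ^^ Suc k) a = a" by (metis comp_apply funpow_Suc_right)
    have "min_nbhd T a \<subseteq> (\<lambda>m. (f ^^ m) a) ` {..<Suc k}"
    proof
      fix x assume x: "x \<in> min_nbhd T a"
      have xX: "x \<in> ?X" using x mn_sub[OF a] by blast
      have "a \<in> min_nbhd T x" using mn_sym[OF assms(2) a x] .
      then have "a \<in> fun_nbhd ?X f x" using mnV[OF xX] by blast
      then obtain n where "(f ^^ n) a = x" unfolding fun_nbhd_def by blast
      then have "(f ^^ (n mod Suc k)) a = x" using funpow_period[OF per] by metis
      then show "x \<in> (\<lambda>m. (f ^^ m) a) ` {..<Suc k}" by force
    qed
    then show "finite (min_nbhd T a)" using finite_subset by blast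
  qed
next
  assume fin: "\<forall>x\<in>topspace T. finite (min_nbhd T x)"
  let ?X = "topspace T"
  obtain f where f: "\<forall>x\<in>?X. f x \<in> ?X \<and> fun_nbhd ?X f x = min_nbhd T x"
    using cyclic_exists[of ?X "min_nbhd T"] mn_self fin mn_sub mn_eq[OF assms(2)] by metis
  have alex: "\<And>a. a \<in> ?X \<Longrightarrow> openin T (min_nbhd T a)"
    using assms(1) unfolding alexandroff_space_def by blast
  show "functional_alexandroff T"
    unfolding functional_alexandroff_def
  proof (intro exI conjI allI)
    show "\<forall>x\<in>?X. f x \<in> ?X" using f by blast
  next
    fix U
    show "openin T U \<longleftrightarrow> (\<exists>\<B>. \<B> \<subseteq> fun_nbhd ?X f ` ?X \<and> U = \<Union>\<B>)"
    proof
      assume U: "openin T U"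
      have UX: "U \<subseteq> ?X" using openin_subset[OF U] .
      let ?B = "fun_nbhd ?X f ` U"
      have "?B \<subseteq> fun_nbhd ?X f ` ?X" using UX by blast
      moreover have "U = \<Union>?B"
      proof
        show "U \<subseteq> \<Union>?B" using f UX mn_self by fastforce
        show "\<Union>?B \<subseteq> U"
        proof
          fix y assume "y \<in> \<Union>?B"
          then obtain a where a: "a \<in> U" "y \<in> min_nbhd T a" using f UX by blast
          then show "y \<in> U" using U unfolding min_nbhd_def by blast
        qed
      qed
      ultimately show "\<exists>\<B>. \<B> \<subseteq> fun_nbhd ?X f ` ?X \<and> U = \<Union>\<B>" by blast
    next
      assume "\<exists>\<B>. \<B> \<subseteq> fun_nbhd ?X f ` ?X \<and> U = \<Union>\<B>"
      then obtain \<B> where B: "\<B> \<subseteq> fun_nbhd ?X f ` ?X" "U = \<Union>\<B>" by blast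
      have "\<forall>S\<in>\<B>. openin T S" using B(1) f alex by auto
      then show "openin T U" using B(2) by (simp add: openin_Union)
    qed
  qed
qed

end
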